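(* For every integer $n\ge 3$, $$\pi_n=\frac{n}{2\cos(\pi/n)}\left(\cos\Big(\tfrac{\pi}{n}\big(2\lfloor\tfrac{n+1}{4}\rfloor-1\big)\Big)-\cos\Big(\tfrac{\pi}{n}\big(2\lfloor\tfrac{n+1}{4}\rfloor+1\big)\Big)\right),$$ equivalently $$\pi_n=\begin{cases} n\tan(\pi/n) & n\equiv 0\pmod 4,\\ n\tan(\pi/n)\cos\big(\tfrac{\pi}{2n}\big) & n \text{ odd},\\ n\sin(\pi/n) & n\equiv 2\pmod 4.\end{cases}$$ In particular $\pi_3=9/2$, $\pi_4=4$, $\pi_5=\tfrac{5(5-\sqrt5)}{4}$, $\pi_6=3$, $\pi_8=8\sqrt2-8$.
   Context: For a convex set $B\subset\mathbb{R}^2$ and an interior point $x_0$, $\|x\|_{B,x_0}:=\inf\{\xi>0 : x\in \xi(B-x_0)\}$. For $n\ge3$ let $B_n$ be a regular convex $n$-gon and $c_n$ its center; $\pi_n$ denotes one half of the perimeter of $B_n$ measured with $\|\cdot\|_{B_n,c_n}$, i.e. $\pi_n=\frac12\sum_{i=1}^n\|p_i-p_{i-1}\|_{B_n,c_n}$ where $p_0,\dots,p_n=p_0$ are the vertices of $B_n$ in counterclockwise order (this is independent of the size, position and orientation of $B_n$, and equals the clockwise value). *)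

theory Defs
  imports "HOL-Analysis.Analysis"
begin

definition gauge_norm :: "complex set \<Rightarrow> complex \<Rightarrow> complex \<Rightarrow> real" where
  "gauge_norm B x0 x = Inf {\<xi>::real. \<xi> > 0 \<and> x \<in> (\<lambda>y. complex_of_real \<xi> * (y - x0)) ` B}"

text \<open>Vertices (counterclockwise) of the regular n-gon with center c,
  circumradius r and rotation angle theta; p k for k = 0..n, with p n = p 0.\<close>
definition reg_vertex :: "nat \<Rightarrow> complex \<Rightarrow> real \<Rightarrow> real \<Rightarrow> nat \<Rightarrow> complex" where
  "reg_vertex n c r \<theta> k = c + complex_of_real r * cis (\<theta> + 2 * pi * real k / real n)"

definition reg_polygon :: "nat \<Rightarrow> complex \<Rightarrow> real \<Rightarrow> real \<Rightarrow> complex set" where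
  "reg_polygon n c r \<theta> = convex hull (reg_vertex n c r \<theta> ` {0..<n})"

definition half_perimeter :: "nat \<Rightarrow> complex \<Rightarrow> real \<Rightarrow> real \<Rightarrow> real" where
  "half_perimeter n c r \<theta> = (1/2) * (\<Sum>i=1..n.
      gauge_norm (reg_polygon n c r \<theta>) c (reg_vertex n c r \<theta> i - reg_vertex n c r \<theta> (i - 1)))"

end

theory Submission
  imports Defs
begin


lemma core_id:
  fixes a x :: real
  shows "complex_of_real (cos a) * (cis (2*a - x) - cis (- x)) = complex_of_real (cos (x - a)) * cis (2*a) - complex_of_real (cos (x + a))"
proof -
  have s2: "sin (2*a) = 2 * sin a * cos a" by (rule sin_double)
  have c2: "cos (2*a) = cos a * cos a - sin a * sin a" by (simp add: cos_double power2_eq_square)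
  have p: "sin a * sin a = 1 - cos a * cos a" by (metis sin_cos_squared_add power2_eq_square add_diff_cancel_right')
  have q: "\<And>y. sin a * (sin a * y) = y - cos a * (cos a * y)"
    by (metis p mult.assoc left_diff_distrib mult_1)
  show ?thesis
    apply (simp add: complex_eq_iff cos_diff sin_diff cos_add sin_add s2 c2 )
    apply (simp add: algebra_simps)
    apply (simp add: q)
    apply (simp add: algebra_simps)
    done
qed

lemma vertex_mod:
  assumes "0 < n"
  shows "reg_vertex n c r \<theta> k = reg_vertex n c r \<theta> (k mod n)"
proof -
  have "real k = real (k mod n) + real n * real (k div n)"
    by (metis of_nat_add of_nat_mult mod_div_mult_eq add.commute mult.commute)
  hence "\<theta> + 2 * pi * real k / real n = (\<theta> + 2 * pi * real (k mod n) / real n) + 2 * pi * real (k div n)"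
    using assms by (simp add: field_simps)
  hence "cis (\<theta> + 2 * pi * real k / real n) = cis (\<theta> + 2 * pi * real (k mod n) / real n) * cis (2 * pi * real (k div n))"
    by (simp only: cis_mult)
  also have "cis (2 * pi * real (k div n)) = 1"
    by (rule cis_multiple_2pi) simp
  finally show ?thesis by (simp add: reg_vertex_def)
qed

lemma cos_odd_le:
  fixes l :: int and n :: nat
  assumes "odd l" "0 < n"
  shows "cos (real_of_int l * pi / real n) \<le> cos (pi / real n)"
proof -
  define q where "q = l mod (2 * int n)"
  have q0: "0 \<le> q" "q < 2 * int n" using assms by (auto simp: q_def)
  have ld: "l = q + 2 * int n * (l div (2 * int n))" by (simp add: q_def)
  have qodd: "odd q" using assms(1) ld by (metis even_add even_mult_iff even_numeral)
  define d where "d = l div (2 * int n)"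
  have "real_of_int l = real_of_int (q + 2 * int n * d)" unfolding d_def by (rule arg_cong[OF ld])
  hence "real_of_int l = real_of_int q + 2 * real n * real_of_int d" by simp
  hence "real_of_int l * pi / real n = real_of_int q * pi / real n + (2 * pi) * real_of_int d"
    using assms by (simp add: field_simps)
  hence e: "cos (real_of_int l * pi / real n) = cos (real_of_int q * pi / real n)"
    by (simp add: cos_add)
  have q1: "1 \<le> q" using q0 qodd by (cases "q = 0") auto
  have npos: "real n > 0" using assms by simp
  show ?thesis
  proof (cases "q \<le> int n")
    case True
    have "pi / real n \<le> real_of_int q * pi / real n" using q1 npos
      by (simp add: divide_right_mono)
    moreover have "real_of_int q * pi / real n \<le> pi" using True npos
      by (simp add: field_simps)
    ultimately show ?thesis unfolding e
      using npos by (subst cos_mono_le_eq) (auto simp: field_simps)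
  next
    case False
    define q' where "q' = 2 * int n - q"
    have "1 \<le> q'" "q' \<le> int n" using False q0 qodd unfolding q'_def by (auto elim!: oddE) 
    have "cos (real_of_int q * pi / real n) = cos (2 * pi - real_of_int q' * pi / real n)"
      using npos by (simp add: q'_def field_simps)
    also have "\<dots> = cos (real_of_int q' * pi / real n)" by (simp add: cos_diff)
    finally have e2: "cos (real_of_int q * pi / real n) = cos (real_of_int q' * pi / real n)" .
    have "pi / real n \<le> real_of_int q' * pi / real n" using \<open>1 \<le> q'\<close> npos
      by (simp add: divide_right_mono)
    moreover have "real_of_int q' * pi / real n \<le> pi" using \<open>q' \<le> int n\<close> npos
      by (simp add: field_simps)
    ultimately show ?thesis unfolding e e2
      using npos by (subst cos_mono_le_eq) (auto simp: field_simps)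
  qed
qed



lemma gauge_side:
  fixes n i :: nat
  assumes n3: "3 \<le> n" and r: "0 < r" and i: "1 \<le> i"
  shows "gauge_norm (reg_polygon n c r \<theta>) c (reg_vertex n c r \<theta> i - reg_vertex n c r \<theta> (i - 1))
     = (cos (pi / real n * (2 * real_of_int \<lfloor>(real n + 1) / 4\<rfloor> - 1))
         - cos (pi / real n * (2 * real_of_int \<lfloor>(real n + 1) / 4\<rfloor> + 1))) / cos (pi / real n)"
proof -
  define a where "a = pi / real n"
  define M where "M = \<lfloor>(real n + 1) / 4\<rfloor>"
  define m where "m = nat M"
  define k where "k = i - 1 + m"
  define x where "x = a * 2 * real_of_int M"
  define \<beta> where "\<beta> = \<theta> + 2 * pi * real k / real n"
  define u where "u = cis (\<beta> + a)"
  define D where "D = cos (x - a) - cos (x + a)"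
  define B where "B = reg_polygon n c r \<theta>"
  define v where "v = reg_vertex n c r \<theta> i - reg_vertex n c r \<theta> (i - 1)"
  have npos: "real n > 0" "n > 0" using n3 by auto
  have M1: "1 \<le> M" unfolding M_def using n3 by (simp add: le_floor_iff)
  have M2: "4 * real_of_int M \<le> real n + 1" unfolding M_def
    using of_int_floor_le[of "(real n + 1) / 4"] by simp
  have M3: "real n + 1 < 4 * real_of_int M + 4"
  proof -
    define z where "z = (real n + 1) / 4"
    have "z < real_of_int \<lfloor>z\<rfloor> + 1" by (rule real_of_int_floor_add_one_gt)
    moreover have "real n + 1 = 4 * z" unfolding z_def by simp
    ultimately show ?thesis unfolding M_def z_def[symmetric] by linarith
  qed
  have M2i: "4 * M \<le> int n + 1" using M2 by linarith
  have M3i: "int n \<le> 4 * M + 2" using M3 by linarith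
  have mM: "real m = real_of_int M" using M1 by (simp add: m_def)
  have kr: "real k = real i - 1 + real_of_int M" using i mM by (simp add: k_def)
  have a0: "0 < a" unfolding a_def using npos by simp
  have a3: "a \<le> pi / 3" unfolding a_def using n3 by (intro divide_left_mono) auto
  have cosa: "cos a > 0" using a0 a3 by (intro cos_gt_zero_pi) auto
  have xa1: "x - a = a * (2 * real_of_int M - 1)" unfolding x_def by (simp add: algebra_simps)
  have xa2: "x + a = a * (2 * real_of_int M + 1)" unfolding x_def by (simp add: algebra_simps)
  have c1: "0 \<le> cos (x - a)"
  proof (rule cos_ge_zero)
    have "0 \<le> a * (2 * real_of_int M - 1)" using a0 M1 by simp
    then show "-(pi/2) \<le> x - a" using xa1 pi_gt_zero by linarith
    have "2 * (2 * M - 1) \<le> int n" using M2i by presburger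
    then have "real_of_int (2 * (2 * M - 1)) \<le> real n" by (metis of_int_le_iff of_int_of_nat_eq)
    then have "real_of_int (2 * (2 * M - 1)) * pi \<le> real n * pi" by (rule mult_right_mono) simp
    then have "(2 * real_of_int M - 1) * pi \<le> real n * pi / 2" by (simp add: field_simps)
    then have "a * (2 * real_of_int M - 1) \<le> pi/2" unfolding a_def using npos by (simp add: field_simps)
    then show "x - a \<le> pi/2" unfolding xa1 .
  qed
  have c2: "cos (x + a) \<le> 0"
  proof -
    have "0 \<le> cos (pi - (x + a))"
    proof (rule cos_ge_zero)
      have "2 * (2 * M + 1) \<le> int (3 * n)" using M2i n3 by presburger
      then have "real_of_int (2 * (2 * M + 1)) \<le> real (3 * n)" by (metis of_int_le_iff of_int_of_nat_eq)
      then have "real_of_int (2 * (2 * M + 1)) \<le> 3 * real n" by simp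
      then have "real_of_int (2 * (2 * M + 1)) * pi \<le> 3 * real n * pi" by (rule mult_right_mono) simp
      then have "(2 * real_of_int M + 1) * pi \<le> 3 * real n * pi / 2" by (simp add: field_simps)
      then have "a * (2 * real_of_int M + 1) \<le> 3 * pi / 2" unfolding a_def using npos by (simp add: field_simps)
      then show "-(pi/2) \<le> pi - (x + a)" unfolding xa2 by simp
      have "int n \<le> 2 * (2 * M + 1)" using M3i by presburger
      then have "real n \<le> real_of_int (2 * (2 * M + 1))" by (metis of_int_le_iff of_int_of_nat_eq)
      then have "real n * pi \<le> real_of_int (2 * (2 * M + 1)) * pi" by (rule mult_right_mono) simp
      then have "real n * pi / 2 \<le> (2 * real_of_int M + 1) * pi" by (simp add: field_simps)
      then have "pi / 2 \<le> a * (2 * real_of_int M + 1)" unfolding a_def using npos by (simp add: field_simps)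
      then show "pi - (x + a) \<le> pi/2" unfolding xa2 by simp
    qed
    then show ?thesis by simp
  qed
  have Dsin: "D = 2 * sin x * sin a" unfolding D_def by (simp add: cos_diff cos_add)
  have sinx: "sin x > 0"
  proof (rule sin_gt_zero)
    show "0 < x" unfolding x_def using a0 M1 by simp
    have "2 * M < int n" using M2i n3 by presburger
    then have "real_of_int (2 * M) < real n" by (metis of_int_less_iff of_int_of_nat_eq)
    then have "real_of_int (2 * M) * pi < real n * pi" by (rule mult_strict_right_mono) simp
    then have "2 * real_of_int M * pi < real n * pi" by simp
    then show "x < pi" unfolding x_def a_def using npos by (simp add: field_simps)
  qed
  have sina: "sin a > 0" using a0 a3 by (intro sin_gt_zero) auto
  have Dpos: "D > 0" using Dsin sinx sina by simp
  have vert: "Re ((reg_vertex n c r \<theta> j - c) * cnj u) \<le> r * cos a" for j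
  proof -
    have "reg_vertex n c r \<theta> j - c = of_real r * cis (\<theta> + 2 * pi * real j / real n)"
      by (simp add: reg_vertex_def)
    then have "(reg_vertex n c r \<theta> j - c) * cnj u = (of_real r * cis (\<theta> + 2 * pi * real j / real n)) * cnj (cis (\<beta> + a))"
      by (simp only: u_def)
    also have "\<dots> = of_real r * cis (\<theta> + 2 * pi * real j / real n - (\<beta> + a))"
      by (simp add: cis_cnj cis_mult mult.assoc, simp add: algebra_simps)
    finally have "(reg_vertex n c r \<theta> j - c) * cnj u = of_real r * cis (\<theta> + 2 * pi * real j / real n - (\<beta> + a))" .
    moreover have "\<theta> + 2 * pi * real j / real n - (\<beta> + a) = real_of_int (2 * (int j - int k) - 1) * pi / real n"
      unfolding \<beta>_def a_def using npos by (simp add: field_simps)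
    ultimately have "Re ((reg_vertex n c r \<theta> j - c) * cnj u) = r * cos (real_of_int (2 * (int j - int k) - 1) * pi / real n)"
      by simp
    also have "\<dots> \<le> r * cos a" unfolding a_def using r npos
      by (intro mult_left_mono cos_odd_le) auto
    finally show ?thesis .
  qed
  have halfsp: "Re ((y - c) * cnj u) \<le> r * cos a" if "y \<in> B" for y
  proof -
    let ?T = "{y. inner u y \<le> r * cos a + inner u c}"
    have T: "?T = {y. Re ((y - c) * cnj u) \<le> r * cos a}"
      by (auto simp: inner_complex_def algebra_simps)
    have "B \<subseteq> ?T" unfolding B_def reg_polygon_def
    proof (rule hull_minimal)
      show "convex ?T" by (rule convex_halfspace_le)
      show "reg_vertex n c r \<theta> ` {0..<n} \<subseteq> ?T" unfolding T using vert by auto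
    qed
    then show ?thesis using that T by auto
  qed
  have e1: "\<theta> + 2 * pi * real i / real n = \<beta> + (2 * a - x)"
    unfolding \<beta>_def a_def x_def kr using npos by (simp add: field_simps)
  have e2: "\<theta> + 2 * pi * real (i - 1) / real n = \<beta> + (- x)"
    unfolding \<beta>_def a_def x_def kr using npos i by (simp add: of_nat_diff field_simps)
  have vform: "v = of_real r * cis \<beta> * (cis (2 * a - x) - cis (- x))"
  proof -
    have f1: "cis (\<beta> + (2 * a - x)) = cis \<beta> * cis (2 * a - x)" by (simp only: cis_mult)
    have f2: "cis (\<beta> + - x) = cis \<beta> * cis (- x)" by (simp only: cis_mult)
    show ?thesis unfolding v_def reg_vertex_def e1 e2 f1 f2 by (simp add: algebra_simps)
  qed
  have Rev: "Re (v * cnj u) = r * D"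
  proof -
    have cb: "cis \<beta> * cnj (cis (\<beta> + a)) = cis (- a)" by (simp add: cis_cnj cis_mult)
    have "v * cnj u = of_real r * (cis \<beta> * cnj (cis (\<beta> + a))) * (cis (2 * a - x) - cis (- x))"
      unfolding vform u_def by (simp only: mult_ac)
    also have "\<dots> = of_real r * (cis (- a) * cis (2 * a - x) - cis (- a) * cis (- x))"
      unfolding cb by (simp only: right_diff_distrib mult.assoc)
    also have "\<dots> = of_real r * (cis (a - x) - cis (- (x + a)))" 
    proof -
      have "- a + (2 * a - x) = a - x" "- a + - x = - (x + a)" by simp_all
      then show ?thesis by (simp only: cis_mult)
    qed
    finally show ?thesis unfolding D_def by (simp add: cos_diff cos_add)
  qed
  define s where "s = - cos (x + a) / D"
  define t where "t = cos (x - a) / D"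
  have s0: "0 \<le> s" unfolding s_def using c2 Dpos by (simp add: divide_nonpos_pos)
  have t0: "0 \<le> t" unfolding t_def using c1 Dpos by (simp add: divide_nonneg_pos)
  have st: "s + t = 1"
  proof -
    have "s + t = (cos (x - a) - cos (x + a)) / D" unfolding s_def t_def by (simp add: diff_divide_distrib)
    also have "\<dots> = 1" unfolding D_def[symmetric] using Dpos by simp
    finally show ?thesis .
  qed
  define pk where "pk = reg_vertex n c r \<theta> k"
  define pk1 where "pk1 = reg_vertex n c r \<theta> (Suc k)"
  have pk: "pk = c + of_real r * cis \<beta>" unfolding pk_def reg_vertex_def \<beta>_def ..
  have pk1: "pk1 = c + of_real r * (cis \<beta> * cis (2 * a))"
  proof -
    have "\<theta> + 2 * pi * real (Suc k) / real n = \<beta> + 2 * a"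
      unfolding \<beta>_def a_def using npos by (simp add: field_simps)
    then show ?thesis unfolding pk1_def reg_vertex_def by (simp add: cis_mult)
  qed
  define y0 where "y0 = s *\<^sub>R pk + t *\<^sub>R pk1"
  have y0B: "y0 \<in> B"
  proof -
    have "pk \<in> reg_vertex n c r \<theta> ` {0..<n}" unfolding pk_def
      using vertex_mod[OF npos(2)] npos by (metis atLeastLessThan_iff image_eqI mod_less_divisor zero_le)
    moreover have "pk1 \<in> reg_vertex n c r \<theta> ` {0..<n}" unfolding pk1_def
      using vertex_mod[OF npos(2)] npos by (metis atLeastLessThan_iff image_eqI mod_less_divisor zero_le)
    ultimately show ?thesis unfolding y0_def B_def reg_polygon_def
      using s0 t0 st by (intro convexD convex_convex_hull) (auto intro: hull_inc)
  qed
  have hsr: "D * s = - cos (x + a)" unfolding s_def using Dpos by simp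
  have htr: "D * t = cos (x - a)" unfolding t_def using Dpos by simp
  have hs: "of_real D * of_real s = - complex_of_real (cos (x + a))"
    using hsr by (metis of_real_mult of_real_minus)
  have ht: "of_real D * of_real t = complex_of_real (cos (x - a))"
    using htr by (metis of_real_mult)
  have y0c: "y0 - c = of_real r * (of_real s * cis \<beta> + of_real t * (cis \<beta> * cis (2 * a)))"
  proof -
    have "y0 - c = (of_real s * pk + of_real t * pk1) - (of_real s + of_real t) * c"
      unfolding y0_def using st by (simp add: scaleR_conv_of_real flip: of_real_add)
    then show ?thesis unfolding pk pk1 by (simp add: algebra_simps)
  qed
  have vy0: "v = of_real (D / cos a) * (y0 - c)"
  proof -
    have "of_real D * (of_real s * cis \<beta> + of_real t * (cis \<beta> * cis (2 * a)))
        = (of_real D * of_real s) * cis \<beta> + (of_real D * of_real t) * (cis \<beta> * cis (2 * a))"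
      by (simp add: algebra_simps)
    also have "\<dots> = cis \<beta> * (of_real (cos (x - a)) * cis (2 * a) - of_real (cos (x + a)))"
      unfolding hs ht by (simp add: algebra_simps)
    also have "\<dots> = cis \<beta> * (of_real (cos a) * (cis (2 * a - x) - cis (- x)))"
      by (simp add: core_id)
    finally have E: "of_real D * (of_real s * cis \<beta> + of_real t * (cis \<beta> * cis (2 * a)))
        = of_real (cos a) * (cis \<beta> * (cis (2 * a - x) - cis (- x)))" by (simp add: algebra_simps)
    have "of_real (D / cos a) * (y0 - c) = of_real r * (of_real D * (of_real s * cis \<beta> + of_real t * (cis \<beta> * cis (2 * a)))) / of_real (cos a)"
      unfolding y0c using cosa by (simp add: field_simps)
    also have "\<dots> = of_real r * (cis \<beta> * (cis (2 * a - x) - cis (- x)))"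
      unfolding E using cosa by simp
    finally show ?thesis unfolding vform by (simp add: algebra_simps)
  qed
  have "gauge_norm B c v = D / cos a"
    unfolding gauge_norm_def
  proof (rule cInf_eq_minimum)
    show "D / cos a \<in> {\<xi>. 0 < \<xi> \<and> v \<in> (\<lambda>y. complex_of_real \<xi> * (y - c)) ` B}"
      using Dpos cosa vy0 y0B by auto
  next
    fix \<xi> assume "\<xi> \<in> {\<xi>. 0 < \<xi> \<and> v \<in> (\<lambda>y. complex_of_real \<xi> * (y - c)) ` B}"
    then obtain y where xi: "0 < \<xi>" and y: "y \<in> B" and vy: "v = of_real \<xi> * (y - c)" by auto
    have "r * D = \<xi> * Re ((y - c) * cnj u)" using Rev unfolding vy by (simp add: mult.assoc)
    also have "\<dots> \<le> \<xi> * (r * cos a)" using halfsp[OF y] xi by (simp add: mult_left_mono)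
    finally have "D \<le> \<xi> * cos a" using r by (simp add: algebra_simps)
    then show "D / cos a \<le> \<xi>" using cosa by (simp add: pos_divide_le_eq)
  qed
  then show ?thesis unfolding B_def v_def a_def D_def x_def M_def[symmetric]
    by (simp add: algebra_simps)
qed



definition Fn :: "nat \<Rightarrow> real" where
  "Fn n = real n / (2 * cos (pi / real n)) *
          (cos (pi / real n * (2 * real_of_int \<lfloor>(real n + 1) / 4\<rfloor> - 1))
         - cos (pi / real n * (2 * real_of_int \<lfloor>(real n + 1) / 4\<rfloor> + 1)))"

lemma hp_formula:
  assumes "3 \<le> n" "0 < r"
  shows "half_perimeter n c r \<theta> = Fn n"
proof -
  have "half_perimeter n c r \<theta> = (1/2) * (\<Sum>i=1..n.
     (cos (pi / real n * (2 * real_of_int \<lfloor>(real n + 1) / 4\<rfloor> - 1))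
         - cos (pi / real n * (2 * real_of_int \<lfloor>(real n + 1) / 4\<rfloor> + 1))) / cos (pi / real n))"
    unfolding half_perimeter_def
    by (intro arg_cong[where f="\<lambda>s. (1/2) * s"] sum.cong[OF refl]) (rule gauge_side[OF assms], simp)
  then show ?thesis unfolding Fn_def by simp
qed

lemma Fn_sin:
  "Fn n = real n / (2 * cos (pi / real n)) *
     (2 * sin (pi / real n * 2 * real_of_int \<lfloor>(real n + 1) / 4\<rfloor>) * sin (pi / real n))"
proof -
  define a where "a = pi / real n"
  define y where "y = a * 2 * real_of_int \<lfloor>(real n + 1) / 4\<rfloor>"
  have e1: "a * (2 * real_of_int \<lfloor>(real n + 1) / 4\<rfloor> - 1) = y - a" unfolding y_def by (simp add: algebra_simps)
  have e2: "a * (2 * real_of_int \<lfloor>(real n + 1) / 4\<rfloor> + 1) = y + a" unfolding y_def by (simp add: algebra_simps)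
  show ?thesis unfolding Fn_def a_def[symmetric] e1 e2 y_def[symmetric] by (simp add: cos_diff cos_add)
qed

lemma Fn_0:
  assumes "n mod 4 = 0" "3 \<le> n"
  shows "Fn n = real n * tan (pi / real n)"
proof -
  obtain q where q: "n = 4 * q" using assms(1) by (metis dvd_def mod_eq_0_iff_dvd)
  have qp: "real q > 0" using q assms by simp
  have M: "\<lfloor>(real n + 1) / 4\<rfloor> = int q" using q by (intro floor_unique) auto
  have "pi / real n * 2 * real_of_int (int q) = pi / 2" using q qp by (simp add: field_simps)
  then show ?thesis unfolding Fn_sin M using q qp by (simp add: tan_def field_simps)
qed

lemma Fn_2:
  assumes "n mod 4 = 2" "3 \<le> n"
  shows "Fn n = real n * sin (pi / real n)"
proof -
  obtain q where q: "n = 4 * q + 2" using assms(1) by (metis mod_div_mult_eq add.commute mult.commute)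
  have M: "\<lfloor>(real n + 1) / 4\<rfloor> = int q" using q by (intro floor_unique) auto
  have "pi / real n * 2 * real_of_int (int q) = pi / 2 - pi / real n" using q by (simp add: field_simps)
  then have s: "sin (pi / real n * 2 * real_of_int (int q)) = cos (pi / real n)" by (simp add: sin_diff)
  have ca: "cos (pi / real n) > 0"
  proof (rule cos_gt_zero_pi)
    have "0 < pi / real n" using assms(2) by simp
    then show "- (pi / 2) < pi / real n" using pi_gt_zero by linarith
    have "pi / real n \<le> pi / 3" using assms(2) by (intro divide_left_mono) auto
    then show "pi / real n < pi / 2" using pi_gt_zero by linarith
  qed
  show ?thesis unfolding Fn_sin M s using ca by simp
qed

lemma Fn_odd:
  assumes "odd n" "3 \<le> n"
  shows "Fn n = real n * tan (pi / real n) * cos (pi / (2 * real n))"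
proof -
  have ca: "cos (pi / real n) > 0"
  proof (rule cos_gt_zero_pi)
    have "0 < pi / real n" using assms(2) by simp
    then show "- (pi / 2) < pi / real n" using pi_gt_zero by linarith
    have "pi / real n \<le> pi / 3" using assms(2) by (intro divide_left_mono) auto
    then show "pi / real n < pi / 2" using pi_gt_zero by linarith
  qed
  have s: "sin (pi / real n * 2 * real_of_int \<lfloor>(real n + 1) / 4\<rfloor>) = cos (pi / (2 * real n))"
  proof (cases "n mod 4 = 1")
    case True
    obtain q where q: "n = 4 * q + 1" using True by (metis mod_div_mult_eq add.commute mult.commute)
    have M: "\<lfloor>(real n + 1) / 4\<rfloor> = int q" using q by (intro floor_unique) auto
    have "pi / real n * 2 * real_of_int (int q) = pi / 2 - pi / (2 * real n)" using q by (simp add: field_simps)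
    then show ?thesis unfolding M by (simp add: sin_diff)
  next
    case False
    then have "n mod 4 = 3" using assms(1) by presburger
    then obtain q where q: "n = 4 * q + 3" by (metis mod_div_mult_eq add.commute mult.commute)
    have M: "\<lfloor>(real n + 1) / 4\<rfloor> = int q + 1" using q by (intro floor_unique) auto
    have "pi / real n * 2 * real_of_int (int q + 1) = pi / 2 + pi / (2 * real n)" using q by (simp add: field_simps)
    then show ?thesis unfolding M by (simp add: sin_add)
  qed
  show ?thesis unfolding Fn_sin s using ca by (simp add: tan_def)
qed

lemma Fn_5: "Fn 5 = 5 * (5 - sqrt 5) / 4"
proof -
  define c where "c = cos (pi / 5)"
  have M: "\<lfloor>(real (5::nat) + 1) / 4\<rfloor> = 1" by (intro floor_unique) auto
  have c3: "cos (3 * (pi / 5)) = 4 * c ^ 3 - 3 * c" unfolding c_def by (rule cos_treble_cos)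
  have "cos (3 * (pi / 5)) = - cos (2 * (pi / 5))"
  proof -
    have e: "3 * (pi / 5) = pi - 2 * (pi / 5)" by simp
    show ?thesis unfolding e by (rule cos_pi_minus)
  qed
  also have "\<dots> = - (2 * c ^ 2 - 1)" unfolding c_def by (simp only: cos_double_cos)
  finally have eq: "4 * c ^ 3 - 3 * c = 1 - 2 * c ^ 2" using c3 by simp
  have c12: "c > 1/2"
  proof -
    have "cos (pi / 3) < cos (pi / 5)" by (rule cos_monotone_0_pi) (auto simp: field_simps)
    then show ?thesis by (simp add: c_def cos_60)
  qed
  have "(c + 1) * (4 * c ^ 2 - 2 * c - 1) = 0" using eq by (simp add: algebra_simps power3_eq_cube power2_eq_square)
  then have q: "4 * c ^ 2 - 2 * c - 1 = 0" using c12 by simp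
  have "sqrt 5 = 4 * c - 1"
    by (rule real_sqrt_unique) (use q c12 in \<open>auto simp: power2_eq_square algebra_simps\<close>)
  then have cv: "c = (1 + sqrt 5) / 4" by simp
  have s5: "sqrt 5 * sqrt 5 = 5" by simp
  have "Fn 5 = 5 / (2 * c) * (c - cos (3 * (pi / 5)))"
    unfolding Fn_def M c_def by (simp add: field_simps)
  also have "\<dots> = 5 / (2 * c) * (c + 2 * c ^ 2 - 1)" using eq c3 by simp
  also have "\<dots> = 5 / (2 * c) * (sqrt 5 / 2)"
  proof -
    have sq: "((1 + sqrt 5) / 4) ^ 2 = (6 + 2 * sqrt 5) / 16"
      by (simp add: power_divide power2_eq_square algebra_simps s5)
    have "c + 2 * c ^ 2 - 1 = sqrt 5 / 2" unfolding cv sq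
      by (simp add: field_simps)
    then show ?thesis by (simp only:)
  qed
  also have "\<dots> = 5 * sqrt 5 / (1 + sqrt 5)"
  proof -
    have "1 + sqrt 5 > 0" "2 + 2 * sqrt 5 > 0" by (simp_all add: add_pos_nonneg)
    then show ?thesis unfolding cv by (simp add: field_simps)
  qed
  also have "\<dots> = 5 * (5 - sqrt 5) / 4"
  proof -
    have p: "(5 - sqrt 5) * (1 + sqrt 5) = 4 * sqrt 5" by (simp add: algebra_simps s5)
    have "1 + sqrt 5 > 0" by (simp add: add_pos_nonneg)
    then show ?thesis using p by (simp add: field_simps)
  qed
  finally show ?thesis .
qed



lemma Fn_3: "Fn 3 = 9 / 2"
proof -
  have "Fn 3 = 3 * tan (pi / 3) * cos (pi / 6)" using Fn_odd[of 3] by simp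
  also have "\<dots> = 9 / 2" by (simp add: tan_60 cos_30)
  finally show ?thesis .
qed

lemma Fn_4: "Fn 4 = 4"
  using Fn_0[of 4] by (simp add: tan_45)

lemma Fn_6: "Fn 6 = 3"
  using Fn_2[of 6] by (simp add: sin_30)

lemma Fn_8: "Fn 8 = 8 * sqrt 2 - 8"
proof -
  have "tan (pi / 8) = sin (2 * (pi / 8)) / (cos (2 * (pi / 8)) + 1)" by (rule tan_half)
  also have "2 * (pi / 8) = pi / 4" by simp
  finally have t: "tan (pi / 8) = (sqrt 2 / 2) / (sqrt 2 / 2 + 1)" by (simp add: sin_45 cos_45)
  have p: "sqrt 2 / 2 + 1 > 0" by (simp add: add_pos_nonneg)
  have s2: "sqrt 2 * sqrt 2 = 2" by simp
  have "Fn 8 = 8 * tan (pi / 8)" using Fn_0[of 8] by simp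
  also have "\<dots> = 8 * sqrt 2 - 8"
  proof -
    have q: "(sqrt 2 - 1) * (sqrt 2 / 2 + 1) = sqrt 2 / 2" by (simp add: algebra_simps s2, simp add: field_simps)
    have "sqrt 2 / 2 / (sqrt 2 / 2 + 1) = (sqrt 2 - 1) * (sqrt 2 / 2 + 1) / (sqrt 2 / 2 + 1)"
      by (simp only: q)
    also have "\<dots> = sqrt 2 - 1" using p by simp
    finally have "sqrt 2 / 2 / (sqrt 2 / 2 + 1) = sqrt 2 - 1" .
    then show ?thesis unfolding t by simp
  qed
  finally show ?thesis .
qed

theorem mainTheorem4:
  shows "(\<forall>(n::nat) c r \<theta>. 3 \<le> n \<and> r > 0 \<longrightarrow>
      half_perimeter n c r \<theta> =
        real n / (2 * cos (pi / real n)) *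
          (cos (pi / real n * (2 * real_of_int \<lfloor>(real n + 1) / 4\<rfloor> - 1))
         - cos (pi / real n * (2 * real_of_int \<lfloor>(real n + 1) / 4\<rfloor> + 1)))
      \<and> (n mod 4 = 0 \<longrightarrow> half_perimeter n c r \<theta> = real n * tan (pi / real n))
      \<and> (odd n \<longrightarrow> half_perimeter n c r \<theta> = real n * tan (pi / real n) * cos (pi / (2 * real n)))
      \<and> (n mod 4 = 2 \<longrightarrow> half_perimeter n c r \<theta> = real n * sin (pi / real n)))
   \<and> (\<forall>c r \<theta>. r > 0 \<longrightarrow>
      half_perimeter 3 c r \<theta> = 9 / 2
      \<and> half_perimeter 4 c r \<theta> = 4
      \<and> half_perimeter 5 c r \<theta> = 5 * (5 - sqrt 5) / 4
      \<and> half_perimeter 6 c r \<theta> = 3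
      \<and> half_perimeter 8 c r \<theta> = 8 * sqrt 2 - 8)"
proof (intro conjI allI impI)
  fix n :: nat and c :: complex and r \<theta> :: real
  assume h: "3 \<le> n \<and> 0 < r"
  then have hp: "half_perimeter n c r \<theta> = Fn n" by (intro hp_formula) auto
  show "half_perimeter n c r \<theta> =
        real n / (2 * cos (pi / real n)) *
          (cos (pi / real n * (2 * real_of_int \<lfloor>(real n + 1) / 4\<rfloor> - 1))
         - cos (pi / real n * (2 * real_of_int \<lfloor>(real n + 1) / 4\<rfloor> + 1)))"
    unfolding hp Fn_def ..
  show "n mod 4 = 0 \<Longrightarrow> half_perimeter n c r \<theta> = real n * tan (pi / real n)"
    unfolding hp using h by (intro Fn_0) auto
  show "odd n \<Longrightarrow> half_perimeter n c r \<theta> = real n * tan (pi / real n) * cos (pi / (2 * real n))"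
    unfolding hp using h by (intro Fn_odd) auto
  show "n mod 4 = 2 \<Longrightarrow> half_perimeter n c r \<theta> = real n * sin (pi / real n)"
    unfolding hp using h by (intro Fn_2) auto
next
  fix c :: complex and r \<theta> :: real
  assume r: "0 < r"
  show "half_perimeter 3 c r \<theta> = 9 / 2" using hp_formula[of 3 r] r Fn_3 by simp
  show "half_perimeter 4 c r \<theta> = 4" using hp_formula[of 4 r] r Fn_4 by simp
  show "half_perimeter 5 c r \<theta> = 5 * (5 - sqrt 5) / 4" using hp_formula[of 5 r] r Fn_5 by simp
  show "half_perimeter 6 c r \<theta> = 3" using hp_formula[of 6 r] r Fn_6 by simp
  show "half_perimeter 8 c r \<theta> = 8 * sqrt 2 - 8" using hp_formula[of 8 r] r Fn_8 by simp
qed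

end
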